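(* Let $K \subsetneq L$ be an extension of fields such that $K$ is relatively algebraically closed in $L$ (every element of $L$ algebraic over $K$ lies in $K$). Let $W$ be the set of intermediate fields $F$ with $K \subset F \subset L$ such that $L$ has transcendence degree $1$ over $F$ and $F$ is relatively algebraically closed in $L$. Then $\bigcap_{F \in W} F = K$. *)

theory Defs
  imports "HOL-Algebra.Algebra"
begin

definition rel_alg_closed :: "('a, 'b) ring_scheme \<Rightarrow> 'a set \<Rightarrow> bool" where
  "rel_alg_closed L F \<longleftrightarrow> (\<forall>x \<in> carrier L. ring.algebraic L F x \<longrightarrow> x \<in> F)"

definition trdeg_one :: "('a, 'b) ring_scheme \<Rightarrow> 'a set \<Rightarrow> bool" where
  "trdeg_one L F \<longleftrightarrow>
     (\<exists>t \<in> carrier L. ring.transcendental L F t \<and>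
        (\<forall>x \<in> carrier L. ring.algebraic L (generate_field L (insert t F)) x))"

end

theory Submission
  imports Defs
begin

definition cl :: "(nat \<Rightarrow> 'a) \<Rightarrow> nat \<Rightarrow> 'a list" where
  "cl c n = rev (map c [0..<n])"

lemma cl_Suc: "cl c (Suc n) = c n # cl c n"
  by (simp add: cl_def)

lemma length_cl [simp]: "length (cl c n) = n"
  by (simp add: cl_def)

lemma set_cl: "set (cl c n) = c ` {..<n}"
  by (auto simp add: cl_def)

lemma cl_nth_rev: "cl (\<lambda>k. rev p ! k) (length p) = p"
proof -
  have "map (\<lambda>k. rev p ! k) [0..<length p] = rev p"
    by (metis length_rev map_nth)
  thus ?thesis by (simp add: cl_def)
qed

lemma (in ring) eval_cl:
  assumes "c ` {..<n} \<subseteq> carrier R" "x \<in> carrier R"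
  shows "eval (cl c n) x = (\<Oplus>k\<in>{..<n}. c k \<otimes> x [^] k)"
  using assms(1)
proof (induction n)
  case 0
  then show ?case by (simp add: cl_def)
next
  case (Suc n)
  have cn: "c n \<in> carrier R" using Suc.prems by auto
  have "c ` {..<n} \<subseteq> carrier R" using Suc.prems by auto
  hence IH: "eval (cl c n) x = (\<Oplus>k\<in>{..<n}. c k \<otimes> x [^] k)" using Suc.IH by auto
  have "eval (cl c (Suc n)) x = c n \<otimes> x [^] n \<oplus> eval (cl c n) x"
    by (simp add: cl_Suc)
  also have "\<dots> = c n \<otimes> x [^] n \<oplus> (\<Oplus>k\<in>{..<n}. c k \<otimes> x [^] k)" using IH by simp
  also have "\<dots> = (\<Oplus>k\<in>insert n {..<n}. c k \<otimes> x [^] k)"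
    using Suc.prems assms(2) by (subst finsum_insert) (auto simp: Pi_def image_subset_iff)
  finally show ?case by (simp add: lessThan_Suc)
qed

lemma (in domain) alg_char:
  assumes K: "subring K R" and x: "x \<in> carrier R"
  shows "algebraic K x \<longleftrightarrow>
    (\<exists>(n::nat) c. c ` {..<n} \<subseteq> K \<and> (\<exists>k<n. c k \<noteq> \<zero>) \<and> (\<Oplus>k\<in>{..<n}. c k \<otimes> x [^] k) = \<zero>)"
proof
  have Kc: "K \<subseteq> carrier R" using subringE(1)[OF K] .
  assume "algebraic K x"
  then obtain p where p: "p \<in> carrier (K[X])" "p \<noteq> []" "eval p x = \<zero>"
    using algebraicE[OF K x] unfolding over_def by blast
  have pol: "polynomial K p" using p(1) univ_poly_carrier by blast
  hence sp: "set p \<subseteq> K" by (rule polynomial_incl)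
  define c where "c = (\<lambda>k. rev p ! k)"
  have clp: "cl c (length p) = p" unfolding c_def by (rule cl_nth_rev)
  have img: "c ` {..<length p} \<subseteq> K" using sp set_cl[of c "length p"] clp by simp
  have "c (length p - 1) = hd p" unfolding c_def using p(2)
    by (simp add: rev_nth hd_conv_nth)
  moreover have "hd p \<noteq> \<zero>" using pol p(2) unfolding polynomial_def by auto
  ultimately have nz: "\<exists>k<length p. c k \<noteq> \<zero>" using p(2)
    by (intro exI[of _ "length p - 1"]) simp
  have "(\<Oplus>k\<in>{..<length p}. c k \<otimes> x [^] k) = \<zero>"
  proof -
    have "c ` {..<length p} \<subseteq> carrier R" using img Kc by blast
    hence "eval (cl c (length p)) x = (\<Oplus>k\<in>{..<length p}. c k \<otimes> x [^] k)"
      using eval_cl x by blast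
    thus ?thesis using clp p(3) by simp
  qed
  thus "\<exists>(n::nat) c. c ` {..<n} \<subseteq> K \<and> (\<exists>k<n. c k \<noteq> \<zero>) \<and> (\<Oplus>k\<in>{..<n}. c k \<otimes> x [^] k) = \<zero>"
    using img nz by (intro exI[where x="length p", OF exI[where x=c]]) simp
next
  have Kc: "K \<subseteq> carrier R" using subringE(1)[OF K] .
  assume "\<exists>(n::nat) c. c ` {..<n} \<subseteq> K \<and> (\<exists>k<n. c k \<noteq> \<zero>) \<and> (\<Oplus>k\<in>{..<n}. c k \<otimes> x [^] k) = \<zero>"
  then obtain n :: nat and c where c0: "c ` {..<n} \<subseteq> K" "\<exists>k<n. c k \<noteq> \<zero>"
    "(\<Oplus>k\<in>{..<n}. c k \<otimes> x [^] k) = \<zero>" by auto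
  then obtain k where "k < n" "c k \<noteq> \<zero>" by auto
  with c0 have c: "c ` {..<n} \<subseteq> K" "k < n" "c k \<noteq> \<zero>"
    "(\<Oplus>k\<in>{..<n}. c k \<otimes> x [^] k) = \<zero>" by auto
  define q where "q = normalize (cl c n)"
  have sK: "set (cl c n) \<subseteq> K" using c(1) set_cl[of c n] by simp
  hence "polynomial K q" unfolding q_def by (rule normalize_gives_polynomial)
  hence q1: "q \<in> carrier (K[X])" using univ_poly_carrier by blast
  have sC: "set (cl c n) \<subseteq> carrier R" using sK Kc by auto
  have q3: "eval q x = \<zero>"
  proof -
    have "c ` {..<n} \<subseteq> carrier R" using c(1) Kc by blast
    hence "eval (cl c n) x = \<zero>" using eval_cl[of c n x] x c(4) by simp
    thus ?thesis using eval_normalize[OF sC x] by (simp add: q_def)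
  qed
  have q2: "q \<noteq> []"
  proof
    assume "q = []"
    hence "cl c n = replicate n \<zero>"
      using normalize_def'(1)[of "cl c n"] unfolding q_def by simp
    moreover have "c k \<in> set (cl c n)" using set_cl[of c n] c(2) by simp
    ultimately show False using c(3) by simp
  qed
  show "algebraic K x" using algebraicI[OF q1 q2 q3] unfolding over_def .
qed

lemma (in field) alg_trans:
  assumes F: "subfield F R" and x: "x \<in> carrier R"
    and alg: "algebraic {y \<in> carrier R. algebraic F y} x"
  shows "algebraic F x"
proof -
  define A where "A = {y \<in> carrier R. algebraic F y}"
  have A: "subfield A R" unfolding A_def using subfield_of_algebraics[OF F] unfolding over_def .
  obtain p where p: "p \<in> carrier (A[X])" "p \<noteq> []" "eval p x = \<zero>"
    using algebraicE[OF subfieldE(1)[OF A] x] alg unfolding over_def A_def by blast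
  have pol: "polynomial A p" using p(1) univ_poly_carrier by blast
  hence spA: "set p \<subseteq> A" by (rule polynomial_incl)
  hence sp: "set p \<subseteq> carrier R" unfolding A_def by auto
  have algp: "\<And>y. y \<in> set p \<Longrightarrow> (algebraic over F) y" using spA unfolding A_def over_def by auto
  define E where "E = finite_extension F p"
  have E: "subfield E R" unfolding E_def using finite_extension_is_subfield[OF F sp] algp by blast
  have fdE: "finite_dimension F E" unfolding E_def
    using finite_extension_finite_dimension(1)[OF F sp] algp by blast
  have spE: "set p \<subseteq> E" unfolding E_def using finite_extension_mem[OF subfieldE(1)[OF F] sp] .
  have "polynomial E p" using pol spE p(2) unfolding polynomial_def by auto
  hence "p \<in> carrier (E[X])" using univ_poly_carrier by blast
  hence algE: "(algebraic over E) x" using algebraicI p(2,3) by blast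
  have fd2: "finite_dimension E (simple_extension E x)"
    using finite_dimension_simple_extension[OF E x] algE by blast
  have fd3: "finite_dimension F (simple_extension E x)"
    using telescopic_base_dim(1)[OF F E fdE fd2] .
  have "subring (simple_extension E x) R"
    using simple_extension_is_subring[OF subfieldE(1)[OF E] x] .
  moreover have "x \<in> simple_extension E x" using simple_extension_mem[OF subfieldE(1)[OF E] x] .
  ultimately have "(algebraic over F) x" using finite_dimension_imp_algebraic[OF F _ fd3] by blast
  thus ?thesis unfolding over_def .
qed

lemma chain_finite_img:
  assumes "C \<noteq> {}" "\<And>F G. F \<in> C \<Longrightarrow> G \<in> C \<Longrightarrow> F \<subseteq> G \<or> G \<subseteq> F"
  shows "c ` {..<(n::nat)} \<subseteq> \<Union>C \<Longrightarrow> \<exists>F\<in>C. c ` {..<n} \<subseteq> F"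
proof (induction n)
  case 0
  then show ?case using assms(1) by auto
next
  case (Suc n)
  then obtain F where F: "F \<in> C" "c ` {..<n} \<subseteq> F" by (auto simp: lessThan_Suc)
  obtain G where G: "G \<in> C" "c n \<in> G" using Suc.prems by (auto simp: lessThan_Suc)
  show ?case
  proof (cases "F \<subseteq> G")
    case True
    then show ?thesis using F G by (intro bexI[of _ G]) (auto simp: lessThan_Suc)
  next
    case False
    then have "G \<subseteq> F" using assms(2)[OF F(1) G(1)] by auto
    then show ?thesis using F G by (intro bexI[of _ F]) (auto simp: lessThan_Suc)
  qed
qed

lemma (in field) chain_subfield:
  assumes "C \<noteq> {}" "\<And>F G. F \<in> C \<Longrightarrow> G \<in> C \<Longrightarrow> F \<subseteq> G \<or> G \<subseteq> F"
    and sf: "\<And>F. F \<in> C \<Longrightarrow> subfield F R"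
  shows "subfield (\<Union>C) R"
proof (rule subfieldI'[OF subringI])
  have two: "\<exists>F\<in>C. a \<in> F \<and> b \<in> F" if hab: "a \<in> \<Union>C" "b \<in> \<Union>C" for a b
  proof -
    obtain F G where "F \<in> C" "G \<in> C" "a \<in> F" "b \<in> G" using hab by auto
    thus ?thesis using assms(2)[of F G] by blast
  qed
  have sr: "subring F R" if "F \<in> C" for F using subfieldE(1)[OF sf[OF that]] .
  show "\<Union>C \<subseteq> carrier R" using subringE(1)[OF sr] by blast
  obtain F0 where "F0 \<in> C" using assms(1) by auto
  then show "\<one> \<in> \<Union>C" using subringE(3)[OF sr] by blast
  show "\<ominus> h \<in> \<Union>C" if hh: "h \<in> \<Union>C" for h
  proof -
    obtain F where F: "F \<in> C" "h \<in> F" using hh by auto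
    then show ?thesis using subringE(5)[OF sr[OF F(1)] F(2)] by blast
  qed
  show "h1 \<otimes> h2 \<in> \<Union>C" if hh: "h1 \<in> \<Union>C" "h2 \<in> \<Union>C" for h1 h2
  proof -
    obtain F where F: "F \<in> C" "h1 \<in> F" "h2 \<in> F" using two[OF hh] by auto
    then show ?thesis using subringE(6)[OF sr[OF F(1)] F(2,3)] by blast
  qed
  show "h1 \<oplus> h2 \<in> \<Union>C" if hh: "h1 \<in> \<Union>C" "h2 \<in> \<Union>C" for h1 h2
  proof -
    obtain F where F: "F \<in> C" "h1 \<in> F" "h2 \<in> F" using two[OF hh] by auto
    then show ?thesis using subringE(7)[OF sr[OF F(1)] F(2,3)] by blast
  qed
  show "inv k \<in> \<Union>C" if hk: "k \<in> \<Union>C - {\<zero>}" for k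
  proof -
    obtain F where F: "F \<in> C" "k \<in> F - {\<zero>}" using hk by auto
    thus ?thesis using subfield_m_inv(1)[OF sf[OF F(1)] F(2)] by blast
  qed
qed

lemma (in field) chain_transcendental:
  assumes "C \<noteq> {}" "\<And>F G. F \<in> C \<Longrightarrow> G \<in> C \<Longrightarrow> F \<subseteq> G \<or> G \<subseteq> F"
    and sf: "\<And>F. F \<in> C \<Longrightarrow> subfield F R"
    and tr: "\<And>F. F \<in> C \<Longrightarrow> transcendental F x"
    and x: "x \<in> carrier R"
  shows "transcendental (\<Union>C) x"
proof (rule ccontr)
  assume "algebraic (\<Union>C) x"
  then obtain n :: nat and c where c: "c ` {..<n} \<subseteq> \<Union>C" "\<exists>k<n. c k \<noteq> \<zero>"
    "(\<Oplus>k\<in>{..<n}. c k \<otimes> x [^] k) = \<zero>"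
    using alg_char[OF subfieldE(1)[OF chain_subfield[OF assms(1,2) sf]] x] by blast
  obtain F where F: "F \<in> C" "c ` {..<n} \<subseteq> F" using chain_finite_img[OF assms(1,2) c(1)] by blast
  have "algebraic F x" using alg_char[OF subfieldE(1)[OF sf[OF F(1)]] x] F(2) c(2,3) by blast
  thus False using tr[OF F(1)] by blast
qed

lemma (in ring) subring_finsum:
  assumes S: "subring S R" and g: "\<And>k. k < n \<Longrightarrow> g k \<in> S"
  shows "(\<Oplus>k\<in>{..<(n::nat)}. g k) \<in> S"
  using g
proof (induction n)
  case 0
  then show ?case using subringE(2)[OF S] by simp
next
  case (Suc n)
  have gc: "g k \<in> carrier R" if "k < Suc n" for k using Suc.prems[OF that] subringE(1)[OF S] by blast
  have "(\<Oplus>k\<in>{..<Suc n}. g k) = g n \<oplus> (\<Oplus>k\<in>{..<n}. g k)"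
    unfolding lessThan_Suc using gc by (subst finsum_insert) (auto simp: Pi_def)
  moreover have "(\<Oplus>k\<in>{..<n}. g k) \<in> S" using Suc by auto
  moreover have "g n \<in> S" using Suc.prems by auto
  ultimately show ?case using subringE(7)[OF S] by simp
qed

lemma (in ring) subring_pow:
  assumes S: "subring S R" and x: "x \<in> S"
  shows "x [^] (k::nat) \<in> S"
proof (induction k)
  case 0
  then show ?case using subringE(3)[OF S] by simp
next
  case (Suc k)
  then show ?case using subringE(6)[OF S Suc x] by simp
qed

lemma (in abelian_monoid) finsum_swap_nat:
  assumes g: "\<And>k j. k < n \<Longrightarrow> j < m \<Longrightarrow> g k j \<in> carrier G"
  shows "(\<Oplus>k\<in>{..<(n::nat)}. \<Oplus>j\<in>{..<(m::nat)}. g k j) = (\<Oplus>j\<in>{..<m}. \<Oplus>k\<in>{..<n}. g k j)"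
  using g
proof (induction n)
  case 0
  then show ?case by (simp add: finsum_zero)
next
  case (Suc n)
  have gc: "g k j \<in> carrier G" if "k < Suc n" "j < m" for k j using Suc.prems that by blast
  have "(\<Oplus>k\<in>{..<Suc n}. \<Oplus>j\<in>{..<m}. g k j) =
        (\<Oplus>j\<in>{..<m}. g n j) \<oplus> (\<Oplus>k\<in>{..<n}. \<Oplus>j\<in>{..<m}. g k j)"
    unfolding lessThan_Suc using gc by (subst finsum_insert) (auto simp: Pi_def intro!: finsum_closed)
  also have "(\<Oplus>k\<in>{..<n}. \<Oplus>j\<in>{..<m}. g k j) = (\<Oplus>j\<in>{..<m}. \<Oplus>k\<in>{..<n}. g k j)"
    using Suc.IH gc by auto
  also have "(\<Oplus>j\<in>{..<m}. g n j) \<oplus> (\<Oplus>j\<in>{..<m}. \<Oplus>k\<in>{..<n}. g k j)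
      = (\<Oplus>j\<in>{..<m}. g n j \<oplus> (\<Oplus>k\<in>{..<n}. g k j))"
    using gc by (subst finsum_addf) (auto simp: Pi_def intro!: finsum_closed)
  also have "\<dots> = (\<Oplus>j\<in>{..<m}. \<Oplus>k\<in>{..<Suc n}. g k j)"
  proof (rule finsum_cong')
    fix j assume j: "j \<in> {..<m}"
    show "g n j \<oplus> (\<Oplus>k\<in>{..<n}. g k j) = (\<Oplus>k\<in>{..<Suc n}. g k j)"
      unfolding lessThan_Suc using gc j by (subst finsum_insert) (auto simp: Pi_def)
  next
    show "(\<lambda>j. \<Oplus>k\<in>{..<Suc n}. g k j) \<in> {..<m} \<rightarrow> carrier G"
      using gc by (auto simp: Pi_def intro!: finsum_closed)
  qed simp
  finally show ?case .
qed

lemma (in domain) simple_ext_rep: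
  assumes M: "subring M R" and z: "z \<in> carrier R" and y: "y \<in> simple_extension M z"
  shows "\<exists>N::nat. \<forall>m\<ge>N. \<exists>e. e ` {..<m} \<subseteq> M \<and> y = (\<Oplus>j\<in>{..<m}. e j \<otimes> z [^] j)"
proof -
  have Mc: "M \<subseteq> carrier R" using subringE(1)[OF M] .
  obtain p where p: "p \<in> carrier (M[X])" "y = eval p z"
    using y unfolding simple_extension_as_eval_img[OF Mc z] by (auto simp: image_iff)
  have sp: "set p \<subseteq> M" using polynomial_incl p(1)[folded univ_poly_carrier] .
  have "\<exists>e. e ` {..<m} \<subseteq> M \<and> y = (\<Oplus>j\<in>{..<m}. e j \<otimes> z [^] j)" if m: "m \<ge> length p" for m
  proof -
    define q where "q = replicate (m - length p) \<zero> @ p"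
    have lq: "length q = m" unfolding q_def using m by simp
    have sq: "set q \<subseteq> M" unfolding q_def using sp subringE(2)[OF M] by auto
    have eq: "eval q z = y" unfolding q_def using eval_replicate[of p z] sp Mc z p(2) by auto
    define e where "e = (\<lambda>k. rev q ! k)"
    have cq: "cl e m = q" unfolding e_def using cl_nth_rev[of q] lq by simp
    have img: "e ` {..<m} \<subseteq> M" using sq set_cl[of e m] cq by simp
    have "eval (cl e m) z = (\<Oplus>j\<in>{..<m}. e j \<otimes> z [^] j)"
      using eval_cl[of e m z] img Mc z by auto
    hence "e ` {..<m} \<subseteq> M \<and> y = (\<Oplus>j\<in>{..<m}. e j \<otimes> z [^] j)" using img cq eq by simp
    thus ?thesis by (rule exI[where x=e])
  qed
  thus ?thesis by (intro exI[of _ "length p"]) simp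
qed

lemma (in field) frac_subfield:
  assumes M: "subfield M R" and z: "z \<in> carrier R"
  shows "generate_field R (insert z M) \<subseteq>
    {s \<in> carrier R. \<exists>b \<in> simple_extension M z - {\<zero>}. b \<otimes> s \<in> simple_extension M z}"
proof -
  define Mz where "Mz = simple_extension M z"
  define D where "D = {s \<in> carrier R. \<exists>b \<in> Mz - {\<zero>}. b \<otimes> s \<in> Mz}"
  have Mc: "M \<subseteq> carrier R" using subfieldE(3)[OF M] .
  have S: "subring Mz R" unfolding Mz_def using simple_extension_is_subring[OF subfieldE(1)[OF M] z] .
  have Sc: "Mz \<subseteq> carrier R" using subringE(1)[OF S] .
  have one: "\<one> \<in> Mz" using subringE(3)[OF S] .
  have D: "subfield D R"
  proof (rule subfieldI'[OF subringI])
    show "D \<subseteq> carrier R" unfolding D_def by auto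
    show "\<one> \<in> D" unfolding D_def using one by (intro CollectI conjI one_closed bexI[of _ \<one>]) auto
  next
    fix h assume "h \<in> D"
    then obtain b where h: "h \<in> carrier R" "b \<in> Mz" "b \<noteq> \<zero>" "b \<otimes> h \<in> Mz" unfolding D_def by auto
    have b: "b \<in> carrier R" using h(2) Sc by auto
    have "b \<otimes> (\<ominus> h) = \<ominus> (b \<otimes> h)" using b h(1) by (simp add: r_minus)
    hence "b \<otimes> (\<ominus> h) \<in> Mz" using subringE(5)[OF S h(4)] by simp
    thus "\<ominus> h \<in> D" unfolding D_def using h by auto
  next
    fix h1 h2 assume "h1 \<in> D" "h2 \<in> D"
    then obtain b1 b2 where h: "h1 \<in> carrier R" "b1 \<in> Mz" "b1 \<noteq> \<zero>" "b1 \<otimes> h1 \<in> Mz"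
      "h2 \<in> carrier R" "b2 \<in> Mz" "b2 \<noteq> \<zero>" "b2 \<otimes> h2 \<in> Mz" unfolding D_def by auto
    have b: "b1 \<in> carrier R" "b2 \<in> carrier R" using h Sc by auto
    have bb: "b1 \<otimes> b2 \<in> Mz" "b1 \<otimes> b2 \<noteq> \<zero>" using subringE(6)[OF S h(2,6)] integral_iff b h(3,7) by auto
    have "(b1 \<otimes> b2) \<otimes> (h1 \<otimes> h2) = (b1 \<otimes> h1) \<otimes> (b2 \<otimes> h2)"
      using b h(1,5) by (simp add: m_ac)
    hence "(b1 \<otimes> b2) \<otimes> (h1 \<otimes> h2) \<in> Mz" using subringE(6)[OF S h(4,8)] by simp
    thus "h1 \<otimes> h2 \<in> D" unfolding D_def using h bb by auto
    have "(b1 \<otimes> b2) \<otimes> (h1 \<oplus> h2) = b2 \<otimes> (b1 \<otimes> h1) \<oplus> b1 \<otimes> (b2 \<otimes> h2)"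
      using b h(1,5) by (simp add: m_ac r_distr)
    moreover have "b2 \<otimes> (b1 \<otimes> h1) \<oplus> b1 \<otimes> (b2 \<otimes> h2) \<in> Mz"
      using subringE(6,7)[OF S] h by blast
    ultimately have "(b1 \<otimes> b2) \<otimes> (h1 \<oplus> h2) \<in> Mz" by simp
    thus "h1 \<oplus> h2 \<in> D" unfolding D_def using h bb by auto
  next
    fix k assume "k \<in> D - {\<zero>}"
    then obtain b where h: "k \<in> carrier R" "k \<noteq> \<zero>" "b \<in> Mz" "b \<noteq> \<zero>" "b \<otimes> k \<in> Mz" unfolding D_def by auto
    have b: "b \<in> carrier R" using h Sc by auto
    have ik: "inv k \<in> carrier R" "k \<otimes> inv k = \<one>" using h(1,2) field_Units by auto
    have nz: "b \<otimes> k \<noteq> \<zero>" using integral_iff b h by auto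
    have "(b \<otimes> k) \<otimes> inv k = b" using ik b h(1) by (simp add: m_assoc)
    hence "(b \<otimes> k) \<otimes> inv k \<in> Mz" using h(3) by simp
    thus "inv k \<in> D" unfolding D_def using ik h nz by (intro CollectI conjI bexI[of _ "b \<otimes> k"]) auto
  qed
  have "insert z M \<subseteq> D"
  proof
    fix s assume "s \<in> insert z M"
    hence "s \<in> Mz" "s \<in> carrier R" unfolding Mz_def
      using simple_extension_mem[OF subfieldE(1)[OF M] z] simple_extension_incl[OF Mc z] z Mc by auto
    thus "s \<in> D" unfolding D_def using one by (intro CollectI conjI bexI[of _ \<one>]) auto
  qed
  hence "generate_field R (insert z M) \<subseteq> D"
    using generate_field_min_subfield1[OF _ D] z Mc by blast
  thus ?thesis unfolding D_def Mz_def .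
qed

lemma (in field) common_denom:
  assumes S: "subring Mz R"
    and c: "c ` {..<(n::nat)} \<subseteq> {s \<in> carrier R. \<exists>b \<in> Mz - {\<zero>}. b \<otimes> s \<in> Mz}"
  shows "\<exists>B \<in> Mz - {\<zero>}. \<forall>k<n. B \<otimes> c k \<in> Mz"
  using c
proof (induction n)
  case 0
  then show ?case using subringE(3)[OF S] by auto
next
  case (Suc n)
  have Sc: "Mz \<subseteq> carrier R" using subringE(1)[OF S] .
  obtain B where B: "B \<in> Mz" "B \<noteq> \<zero>" "\<forall>k<n. B \<otimes> c k \<in> Mz" using Suc by (auto simp: lessThan_Suc)
  obtain b where b: "c n \<in> carrier R" "b \<in> Mz" "b \<noteq> \<zero>" "b \<otimes> c n \<in> Mz" using Suc.prems by (auto simp: lessThan_Suc)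
  have cc: "c k \<in> carrier R" if "k < Suc n" for k using Suc.prems that by auto
  have Bb: "B \<in> carrier R" "b \<in> carrier R" using B b Sc by auto
  have nz: "b \<otimes> B \<noteq> \<zero>" using integral_iff Bb B b by auto
  have "b \<otimes> B \<otimes> c k \<in> Mz" if k: "k < Suc n" for k
  proof (cases "k = n")
    case True
    have "b \<otimes> B \<otimes> c k = B \<otimes> (b \<otimes> c n)" using True Bb b by (simp add: m_ac)
    thus ?thesis using subringE(6)[OF S B(1) b(4)] by simp
  next
    case False
    hence "k < n" using k by simp
    have "b \<otimes> B \<otimes> c k = b \<otimes> (B \<otimes> c k)" using cc[OF k] Bb by (simp add: m_assoc)
    thus ?thesis using subringE(6)[OF S b(2)] B(3) \<open>k < n\<close> by simp
  qed
  moreover have "b \<otimes> B \<in> Mz" using subringE(6)[OF S b(2) B(1)] .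
  ultimately show ?case using nz by blast
qed

lemma (in field) exchange:
  assumes M: "subfield M R" and x: "x \<in> carrier R" and z: "z \<in> carrier R"
    and tr: "transcendental M x"
    and alg: "algebraic (generate_field R (insert z M)) x"
  shows "algebraic (generate_field R (insert x M)) z"
proof -
  have Mc: "M \<subseteq> carrier R" using subfieldE(3)[OF M] .
  define Gz where "Gz = generate_field R (insert z M)"
  define Gx where "Gx = generate_field R (insert x M)"
  have Gz: "subfield Gz R" unfolding Gz_def using generate_field_is_subfield Mc z by auto
  have Gx: "subfield Gx R" unfolding Gx_def using generate_field_is_subfield Mc x by auto
  have GxS: "subring Gx R" using subfieldE(1)[OF Gx] .
  have MGx: "M \<subseteq> Gx" "x \<in> Gx" unfolding Gx_def by (auto intro: generate_field.incl)
  define Mz where "Mz = simple_extension M z"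
  have S: "subring Mz R" unfolding Mz_def using simple_extension_is_subring[OF subfieldE(1)[OF M] z] .
  have Sc: "Mz \<subseteq> carrier R" using subringE(1)[OF S] .
  obtain n :: nat and c where c0: "c ` {..<n} \<subseteq> Gz" "\<exists>k<n. c k \<noteq> \<zero>"
    "(\<Oplus>k\<in>{..<n}. c k \<otimes> x [^] k) = \<zero>"
    using alg_char[OF subfieldE(1)[OF Gz] x] alg unfolding Gz_def by blast
  obtain k0 where k0: "k0 < n" "c k0 \<noteq> \<zero>" using c0(2) by blast
  have cc: "c k \<in> carrier R" if "k < n" for k using c0(1) that subfieldE(3)[OF Gz] by blast
  have "c ` {..<n} \<subseteq> {s \<in> carrier R. \<exists>b \<in> Mz - {\<zero>}. b \<otimes> s \<in> Mz}"
    using c0(1) frac_subfield[OF M z] unfolding Gz_def Mz_def by blast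
  then obtain B where B: "B \<in> Mz" "B \<noteq> \<zero>" "\<And>k. k < n \<Longrightarrow> B \<otimes> c k \<in> Mz"
    using common_denom[OF S] by blast
  have Bc: "B \<in> carrier R" using B(1) Sc by blast
  define d where "d k = B \<otimes> c k" for k
  have dMz: "d k \<in> Mz" if "k < n" for k unfolding d_def using B(3) that .
  have dc: "d k \<in> carrier R" if "k < n" for k using dMz[OF that] Sc by blast
  have xk: "x [^] (k::nat) \<in> carrier R" for k using x by simp
  have dsum: "(\<Oplus>k\<in>{..<n}. d k \<otimes> x [^] k) = \<zero>"
  proof -
    have "(\<Oplus>k\<in>{..<n}. d k \<otimes> x [^] k) = (\<Oplus>k\<in>{..<n}. B \<otimes> (c k \<otimes> x [^] k))"
      by (rule finsum_cong') (auto simp: d_def m_assoc Bc cc xk Pi_def)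
    also have "\<dots> = B \<otimes> (\<Oplus>k\<in>{..<n}. c k \<otimes> x [^] k)"
      by (rule finsum_rdistr[symmetric]) (auto simp: Bc cc xk Pi_def)
    also have "\<dots> = \<zero>" using c0(3) Bc by simp
    finally show ?thesis .
  qed
  have dk0: "d k0 \<noteq> \<zero>" unfolding d_def using integral_iff Bc cc[OF k0(1)] B(2) k0(2) by auto
  have rep: "\<exists>N::nat. \<forall>m\<ge>N. \<exists>e. e ` {..<m} \<subseteq> M \<and> d k = (\<Oplus>j\<in>{..<m}. e j \<otimes> z [^] j)"
    if "k < n" for k
    using simple_ext_rep[OF subfieldE(1)[OF M] z] dMz[OF that] unfolding Mz_def by blast
  define NN where "NN k = (SOME N::nat. \<forall>m\<ge>N. \<exists>e. e ` {..<m} \<subseteq> M \<and> d k = (\<Oplus>j\<in>{..<m}. e j \<otimes> z [^] j))" for k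
  have NN: "\<forall>m\<ge>NN k. \<exists>e. e ` {..<m} \<subseteq> M \<and> d k = (\<Oplus>j\<in>{..<m}. e j \<otimes> z [^] j)"
    if "k < n" for k
    unfolding NN_def using someI_ex[OF rep[OF that]] .
  define m where "m = (\<Sum>k<n. NN k)"
  have NNm: "NN k \<le> m" if "k < n" for k
    unfolding m_def by (rule member_le_sum) (use that in auto)
  define E where "E k = (SOME e. e ` {..<m} \<subseteq> M \<and> d k = (\<Oplus>j\<in>{..<m}. e j \<otimes> z [^] j))" for k
  have HE: "E k ` {..<m} \<subseteq> M \<and> d k = (\<Oplus>j\<in>{..<m}. E k j \<otimes> z [^] j)" if "k < n" for k
  proof -
    have "\<exists>e. e ` {..<m} \<subseteq> M \<and> d k = (\<Oplus>j\<in>{..<m}. e j \<otimes> z [^] j)"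
      using NN[OF that] NNm[OF that] by blast
    thus ?thesis unfolding E_def by (rule someI_ex)
  qed
  have EM: "E k j \<in> M" if "k < n" "j < m" for k j using HE[OF that(1)] that(2) by blast
  have Ec: "E k j \<in> carrier R" if "k < n" "j < m" for k j using EM[OF that] Mc by blast
  have zj: "z [^] (j::nat) \<in> carrier R" for j using z by simp
  define f where "f j = (\<Oplus>k\<in>{..<n}. E k j \<otimes> x [^] k)" for j
  have fc: "f j \<in> carrier R" if "j < m" for j
    unfolding f_def using Ec that xk by (auto intro!: finsum_closed simp: Pi_def)
  have main: "(\<Oplus>j\<in>{..<m}. f j \<otimes> z [^] j) = \<zero>"
  proof -
    have "\<zero> = (\<Oplus>k\<in>{..<n}. (\<Oplus>j\<in>{..<m}. E k j \<otimes> z [^] j) \<otimes> x [^] k)"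
      using dsum[symmetric] HE by (auto intro!: finsum_cong' simp: Pi_def xk Ec zj intro: finsum_closed)
    also have "\<dots> = (\<Oplus>k\<in>{..<n}. \<Oplus>j\<in>{..<m}. (E k j \<otimes> z [^] j) \<otimes> x [^] k)"
      by (rule finsum_cong') (auto simp: Pi_def xk Ec zj finsum_ldistr intro!: finsum_closed)
    also have "\<dots> = (\<Oplus>j\<in>{..<m}. \<Oplus>k\<in>{..<n}. (E k j \<otimes> z [^] j) \<otimes> x [^] k)"
      by (rule finsum_swap_nat) (auto simp: xk Ec zj)
    also have "\<dots> = (\<Oplus>j\<in>{..<m}. \<Oplus>k\<in>{..<n}. (E k j \<otimes> x [^] k) \<otimes> z [^] j)"
      by (intro finsum_cong' refl) (auto simp: Pi_def xk Ec zj m_ac intro!: finsum_closed)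
    also have "\<dots> = (\<Oplus>j\<in>{..<m}. f j \<otimes> z [^] j)"
      unfolding f_def
      by (rule finsum_cong') (auto simp: Pi_def xk Ec zj finsum_ldistr intro!: finsum_closed)
    finally show ?thesis by simp
  qed
  obtain j0 where j0: "j0 < m" "E k0 j0 \<noteq> \<zero>"
  proof (rule ccontr)
    assume "\<not> thesis"
    hence "\<And>j. j < m \<Longrightarrow> E k0 j = \<zero>" using that by blast
    hence "(\<Oplus>j\<in>{..<m}. E k0 j \<otimes> z [^] j) = (\<Oplus>j\<in>{..<m}. \<zero>)"
      using zj by (intro finsum_cong') (auto simp: Pi_def)
    hence "d k0 = \<zero>" using HE[OF k0(1)] by (simp add: finsum_zero)
    thus False using dk0 by simp
  qed
  have fnz: "f j0 \<noteq> \<zero>"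
  proof
    assume "f j0 = \<zero>"
    hence "(\<Oplus>k\<in>{..<n}. E k j0 \<otimes> x [^] k) = \<zero>" unfolding f_def .
    moreover have "(\<lambda>k. E k j0) ` {..<n} \<subseteq> M" using EM j0(1) by blast
    ultimately have "algebraic M x"
      using alg_char[OF subfieldE(1)[OF M] x] k0(1) j0(2) by blast
    thus False using tr by blast
  qed
  have fG: "f j \<in> Gx" if "j < m" for j
    unfolding f_def
    by (rule subring_finsum[OF GxS]) (use subringE(6)[OF GxS] subring_pow[OF GxS MGx(2)] EM that MGx(1) in blast)
  have "algebraic Gx z"
    using alg_char[OF GxS z] fG j0(1) fnz main by blast
  thus ?thesis unfolding Gx_def .
qed

lemma (in field) key:
  assumes K: "subfield K R" and rac: "rel_alg_closed R K" and x: "x \<in> carrier R" "x \<notin> K"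
  shows "\<exists>F. subfield F R \<and> K \<subseteq> F \<and> trdeg_one R F \<and> rel_alg_closed R F \<and> x \<notin> F"
proof -
  have trK: "transcendental K x"
    using rac x unfolding rel_alg_closed_def by blast
  define S where "S = {F. subfield F R \<and> K \<subseteq> F \<and> transcendental F x}"
  have chainub: "\<exists>U\<in>S. \<forall>Y\<in>C. Y \<subseteq> U" if ch: "subset.chain S C" for C
  proof (cases "C = {}")
    case True
    then show ?thesis using K trK unfolding S_def by auto
  next
    case False
    have CS: "C \<subseteq> S" and cmp: "\<And>F G. F \<in> C \<Longrightarrow> G \<in> C \<Longrightarrow> F \<subseteq> G \<or> G \<subseteq> F"
      using ch unfolding subset_chain_def by blast+
    have sf: "\<And>F. F \<in> C \<Longrightarrow> subfield F R" using CS unfolding S_def by blast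
    have tr: "\<And>F. F \<in> C \<Longrightarrow> transcendental F x" using CS unfolding S_def by blast
    obtain F0 where F0: "F0 \<in> C" using False by blast
    have "K \<subseteq> F0" using CS F0 unfolding S_def by blast
    hence KU: "K \<subseteq> \<Union>C" using F0 by blast
    have "\<Union>C \<in> S" unfolding S_def
      using chain_subfield[OF False cmp sf] chain_transcendental[OF False cmp sf tr x(1)] KU
      by simp
    moreover have "\<forall>Y\<in>C. Y \<subseteq> \<Union>C" by blast
    ultimately show ?thesis by (rule bexI[rotated])
  qed
  have "\<exists>M\<in>S. \<forall>Y\<in>S. M \<subseteq> Y \<longrightarrow> Y = M"
    by (rule subset_Zorn) (rule chainub)
  then obtain M where MS: "M \<in> S" and maxM0: "\<forall>Y\<in>S. M \<subseteq> Y \<longrightarrow> Y = M"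
    by (elim bexE) (rule that)
  have maxM: "\<And>Y. Y \<in> S \<Longrightarrow> M \<subseteq> Y \<Longrightarrow> Y = M" using maxM0 by blast
  have M: "subfield M R" "K \<subseteq> M" "transcendental M x" using MS unfolding S_def by auto
  have Mc: "M \<subseteq> carrier R" using subfieldE(3)[OF M(1)] .
  have xM: "x \<notin> M"
  proof
    assume "x \<in> M"
    hence "(algebraic over M) x" using algebraic_self[OF subfieldE(1)[OF M(1)]] by blast
    thus False using M(3) unfolding over_def by blast
  qed
  have maxp: "algebraic (generate_field R (insert y M)) x" if y: "y \<in> carrier R" "y \<notin> M" for y
  proof (rule ccontr)
    define G where "G = generate_field R (insert y M)"
    assume "\<not> algebraic (generate_field R (insert y M)) x"
    hence trG: "transcendental G x" unfolding G_def by blast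
    have sG: "subfield G R" unfolding G_def using generate_field_is_subfield Mc y(1) by auto
    have MG: "M \<subseteq> G" "y \<in> G" unfolding G_def by (auto intro: generate_field.incl)
    have "G \<in> S" unfolding S_def using sG MG M(2) trG by auto
    hence "G = M" using maxM MG by blast
    thus False using MG y by blast
  qed
  have racM: "rel_alg_closed R M"
    unfolding rel_alg_closed_def
  proof (intro ballI impI)
    fix y assume y: "y \<in> carrier R" "algebraic M y"
    show "y \<in> M"
    proof (rule ccontr)
      assume yM: "y \<notin> M"
      define A where "A = {y \<in> carrier R. algebraic M y}"
      have A: "subfield A R" unfolding A_def using subfield_of_algebraics[OF M(1)] unfolding over_def .
      have "insert y M \<subseteq> A" unfolding A_def using y Mc algebraic_self[OF subfieldE(1)[OF M(1)]]
        unfolding over_def by blast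
      hence GA: "generate_field R (insert y M) \<subseteq> A"
        using generate_field_min_subfield1[OF _ A] y(1) Mc by blast
      have "(algebraic over A) x" using algebraic_mono[OF GA] maxp[OF y(1) yM] unfolding over_def by blast
      hence "algebraic M x" using alg_trans[OF M(1) x(1)] unfolding over_def A_def by blast
      thus False using M(3) by blast
    qed
  qed
  have trd: "trdeg_one R M"
    unfolding trdeg_one_def
  proof (intro bexI[of _ x] conjI ballI)
    show "x \<in> carrier R" using x(1) .
    show "transcendental M x" using M(3) .
    fix z assume z: "z \<in> carrier R"
    show "algebraic (generate_field R (insert x M)) z"
    proof (cases "z \<in> M")
      case True
      have Gx: "subfield (generate_field R (insert x M)) R" using generate_field_is_subfield Mc x(1) by auto
      have "z \<in> generate_field R (insert x M)" using True by (auto intro: generate_field.incl)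
      thus ?thesis using algebraic_self[OF subfieldE(1)[OF Gx]] unfolding over_def by blast
    next
      case False
      show ?thesis using exchange[OF M(1) x(1) z M(3) maxp[OF z False]] .
    qed
  qed
  have "subfield M R \<and> K \<subseteq> M \<and> trdeg_one R M \<and> rel_alg_closed R M \<and> x \<notin> M"
    using M(1,2) trd racM xM by simp
  thus ?thesis by (rule exI)
qed

theorem lemma3p8:
  fixes L (structure) and K :: "'a set"
  assumes "field L"
    and "subfield K L"
    and "K \<noteq> carrier L"
    and "rel_alg_closed L K"
  shows "\<Inter> {F. subfield F L \<and> K \<subseteq> F \<and> trdeg_one L F \<and> rel_alg_closed L F} = K"
proof -
  interpret field L by (rule assms(1))
  define W where "W = {F. subfield F L \<and> K \<subseteq> F \<and> trdeg_one L F \<and> rel_alg_closed L F}"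
  have Kc: "K \<subseteq> carrier L" using subfieldE(3)[OF assms(2)] .
  obtain x0 where x0: "x0 \<in> carrier L" "x0 \<notin> K" using assms(3) Kc by blast
  have sub1: "K \<subseteq> \<Inter> W" unfolding W_def by blast
  have sub2: "\<Inter> W \<subseteq> K"
  proof
    fix y assume y: "y \<in> \<Inter> W"
    show "y \<in> K"
    proof (rule ccontr)
      assume yK: "y \<notin> K"
      show False
      proof (cases "y \<in> carrier L")
        case True
        obtain F where F: "subfield F L" "K \<subseteq> F" "trdeg_one L F" "rel_alg_closed L F" "y \<notin> F"
          using key[OF assms(2) assms(4) True yK] by blast
        hence "F \<in> W" unfolding W_def by blast
        thus False using y F(5) by blast
      next
        case False
        obtain F where F: "subfield F L" "K \<subseteq> F" "trdeg_one L F" "rel_alg_closed L F" "x0 \<notin> F"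
          using key[OF assms(2) assms(4) x0] by blast
        hence "F \<in> W" unfolding W_def by blast
        hence "y \<in> F" using y by blast
        thus False using False subfieldE(3)[OF F(1)] by blast
      qed
    qed
  qed
  show ?thesis using sub1 sub2 unfolding W_def by blast
qed

end
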